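(* For every cube $K=[-q\mathbf 1,q\mathbf 1]$ ($q>0$) and every $\sigma\in\Sigma$, the Lebesgue measure of $S_K(\sigma)$ satisfies $|S_K(\sigma)|\le 2^{d+1}\psi_K(\sigma)$.
   Context: Order conventions: for $x,y\in\mathbb R^d$, $x\le y$ iff $x_i\le y_i$ for all $i$; $\mathbf 1=(1,\dots,1)$; $|x|_\infty=\max_i|x_i|$; $x!=x_1x_2\cdots x_d$; $[a,b]=\{x:a\le x\le b\}$. Fix $d\ge2$. $\mathbb Z^*=\mathbb Z\cup\{\pm\infty\}$. The state space $\Sigma$ is the set of functions $\sigma:\mathbb R^d\to\mathbb Z^*$ such that (i) $x\le y$ implies $\sigma(x)\le\sigma(y)$; (ii) for every cube $[-q\mathbf 1,q\mathbf 1]$ there are finite partitions $-q=s_i^0<\dots<s_i^{m_i}=q$ of each coordinate axis such that $\sigma$ is constant on each rectangle $\prod_i[s_i^{k_i},s_i^{k_i+1})$; (iii) for every $b\in\mathbb R^d$, $\lim_{M\to\infty}\sup\{|y|_\infty^{-d/(d+1)}\sigma(y):y\le b,|y|_\infty\ge M\}=-\infty$. For $\sigma\in\Sigma$ and $x\in\mathbb R^d$: $S_x(\sigma)=\{y: y\le x,\ \sigma(y)=\sigma(x)\}$ if $\sigma(x)$ is finite, and $S_x(\sigma)=\emptyset$ if $\sigma(x)=\pm\infty$; $S_K(\sigma)=\bigcup_{x\in K}S_x(\sigma)$. For $b\in\mathbb R^d$, $h\in\mathbb Z$, $y^{b,h}(\sigma)$ is the maximal point $y\le b$ such that the rectangle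 $[y,b]$ contains $\{x\le b:\sigma(x)\ge h\}$ (and $y^{b,h}(\sigma)=b$ if this set is empty). With $K=[-q\mathbf 1,q\mathbf 1]$ write $y^h=y^{q\mathbf 1,h}(\sigma)$ and $\lambda_k(\sigma)=\sup_{-\infty<h\le k-2}(q\mathbf 1-y^h)!\,(k-h)^{-(d+1)}$ for $k\in\mathbb Z$. $I(K,\sigma)=\min\{\sigma(x):x\in K,\sigma(x)\text{ finite}\}$, $J(K,\sigma)=\max\{\sigma(x):x\in K,\sigma(x)\text{ finite}\}$ (if $\sigma=\pm\infty$ on all of $K$, set $I=\infty=-J$). Finally $\psi_K(\sigma)=\big(\sum_{k=I(K,\sigma)+1}^{J(K,\sigma)+1}\lambda_k^2(\sigma)\big)^{1/2}$ (empty sum $=0$). *)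

theory Defs
  imports "HOL-Analysis.Analysis"
begin

text \<open>Dimension d is CARD('n); points of R^d are real^'n with the componentwise
order (less_eq_vec_def).\<close>

definition supnorm :: "real ^ 'n \<Rightarrow> real" where
  "supnorm y = Max (range (\<lambda>i. \<bar>y $ i\<bar>))"

definition vprod :: "real ^ 'n \<Rightarrow> real" where
  "vprod x = (\<Prod>i\<in>UNIV. x $ i)"

definition cube :: "real \<Rightarrow> (real ^ 'n) set" where
  "cube q = {- vec q .. vec q}"

definition int_star :: "ereal set" where
  "int_star = {\<infinity>, -\<infinity>} \<union> range (\<lambda>n::int. ereal (real_of_int n))"

definition StateSpace :: "(real ^ 'n \<Rightarrow> ereal) set" where
  "StateSpace = {\<sigma>.
     (\<forall>x. \<sigma> x \<in> int_star) \<and>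
     mono \<sigma> \<and>
     (\<forall>q>0. \<exists>(s :: 'n \<Rightarrow> nat \<Rightarrow> real) (m :: 'n \<Rightarrow> nat).
        (\<forall>i. s i 0 = -q \<and> s i (m i) = q \<and> (\<forall>k < m i. s i k < s i (Suc k))) \<and>
        (\<forall>k :: 'n \<Rightarrow> nat. (\<forall>i. k i < m i) \<longrightarrow>
            (\<forall>x y. (\<forall>i. s i (k i) \<le> x $ i \<and> x $ i < s i (Suc (k i))) \<longrightarrow>
                   (\<forall>i. s i (k i) \<le> y $ i \<and> y $ i < s i (Suc (k i))) \<longrightarrow>
                   \<sigma> x = \<sigma> y))) \<and>
     (\<forall>b. ((\<lambda>M::real. Sup {ereal (supnorm y powr (- real CARD('n) / (real CARD('n) + 1))) * \<sigma> y
                           | y. y \<le> b \<and> supnorm y \<ge> M}) \<longlongrightarrow> -\<infinity>) at_top)}"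

definition Sx :: "(real ^ 'n \<Rightarrow> ereal) \<Rightarrow> real ^ 'n \<Rightarrow> (real ^ 'n) set" where
  "Sx \<sigma> x = (if \<bar>\<sigma> x\<bar> \<noteq> \<infinity> then {y. y \<le> x \<and> \<sigma> y = \<sigma> x} else {})"

definition SK :: "(real ^ 'n \<Rightarrow> ereal) \<Rightarrow> (real ^ 'n) set \<Rightarrow> (real ^ 'n) set" where
  "SK \<sigma> K = (\<Union>x\<in>K. Sx \<sigma> x)"

definition ybh :: "(real ^ 'n \<Rightarrow> ereal) \<Rightarrow> real ^ 'n \<Rightarrow> int \<Rightarrow> real ^ 'n" where
  "ybh \<sigma> b h = (GREATEST y. y \<le> b \<and> {x. x \<le> b \<and> \<sigma> x \<ge> ereal (real_of_int h)} \<subseteq> {y..b})"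

definition lam :: "real \<Rightarrow> (real ^ 'n \<Rightarrow> ereal) \<Rightarrow> int \<Rightarrow> ereal" where
  "lam q \<sigma> k = (SUP h\<in>{..k-2}.
      ereal (vprod (vec q - ybh \<sigma> (vec q) h) / (real_of_int (k - h)) ^ (CARD('n) + 1)))"

definition Ival :: "(real ^ 'n) set \<Rightarrow> (real ^ 'n \<Rightarrow> ereal) \<Rightarrow> ereal" where
  "Ival K \<sigma> = Inf {\<sigma> x | x. x \<in> K \<and> \<bar>\<sigma> x\<bar> \<noteq> \<infinity>}"

definition Jval :: "(real ^ 'n) set \<Rightarrow> (real ^ 'n \<Rightarrow> ereal) \<Rightarrow> ereal" where
  "Jval K \<sigma> = Sup {\<sigma> x | x. x \<in> K \<and> \<bar>\<sigma> x\<bar> \<noteq> \<infinity>}"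

definition psi :: "real \<Rightarrow> (real ^ 'n \<Rightarrow> ereal) \<Rightarrow> ereal" where
  "psi q \<sigma> = (let s = (\<Sum>k\<in>{k::int. Ival (cube q) \<sigma> + 1 \<le> ereal (real_of_int k)
                                  \<and> ereal (real_of_int k) \<le> Jval (cube q) \<sigma> + 1}.
                       lam q \<sigma> k * lam q \<sigma> k)
               in if s = \<infinity> then \<infinity> else ereal (sqrt (real_of_ereal s)))"

end

theory Submission
  imports Defs
begin

lemma down_cl_int:
  fixes D :: "(real^'n) set"
  assumes down: "\<And>x y. y \<le> x \<Longrightarrow> x \<in> D \<Longrightarrow> y \<in> D"
    and y: "y \<in> closure D" and t: "t > 0"
  shows "y - vec t \<in> interior D"
proof -
  obtain w where w: "w \<in> D" "dist w y < t/2"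
    using y t unfolding closure_approachable by (meson half_gt_zero)
  have "ball (y - vec t) (t/2) \<subseteq> D"
  proof
    fix z assume z: "z \<in> ball (y - vec t) (t/2)"
    have "z \<le> w"
      unfolding less_eq_vec_def
    proof
      fix i
      have "\<bar>(z - (y - vec t))$i\<bar> \<le> norm (z - (y - vec t))" by (rule component_le_norm_cart)
      also have "\<dots> < t/2" using z by (simp add: dist_norm norm_minus_commute)
      finally have h1: "\<bar>z$i - (y$i - t)\<bar> < t/2" by simp
      have 1: "z$i < y$i - t/2" using h1 abs_ge_self[of "z$i - (y$i - t)"] by linarith
      have "\<bar>(w - y)$i\<bar> \<le> norm (w - y)" by (rule component_le_norm_cart)
      also have "\<dots> < t/2" using w by (simp add: dist_norm)
      finally have h2: "\<bar>w$i - y$i\<bar> < t/2" by simp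
      have 2: "y$i - t/2 < w$i" using h2 abs_ge_minus_self[of "w$i - y$i"] by linarith
      show "z$i \<le> w$i" using 1 2 by simp
    qed
    then show "z \<in> D" using down w by blast
  qed
  then show ?thesis unfolding mem_interior using t by (meson half_gt_zero)
qed

lemma down_bdry_null:
  fixes D :: "(real^'n) set"
  assumes down: "\<And>x y. y \<le> x \<Longrightarrow> x \<in> D \<Longrightarrow> y \<in> D"
  shows "negligible (closure D - interior D)"
proof -
  define B where "B = closure D - interior D"
  have disj: False if "p \<in> B" "p - vec s \<in> B" "s > 0" for p s
  proof -
    have "p - vec s \<in> interior D" by (rule down_cl_int) (use down that in \<open>auto simp: B_def\<close>)
    then show False using that unfolding B_def by blast
  qed
  define C where "C R = B \<inter> cbox (- vec (real R)) (vec (real R))" for R :: nat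
  have cC: "compact (C R)" for R
    unfolding C_def B_def
    unfolding Diff_eq by (intro closed_Int_compact closed_Int closed_Compl) auto
  have "negligible (C R)" for R
  proof -
    let ?m = "measure lebesgue (C R)"
    define T where "T k = (+) (vec (1 / real (Suc k))) ` C R" for k
    have Tm: "T k \<in> lmeasurable" for k
      unfolding T_def by (intro measurable_translation lmeasurable_compact cC)
    have Tmeas: "measure lebesgue (T k) = ?m" for k
      unfolding T_def by (rule measure_translation)
    have Tsub: "T k \<subseteq> cbox (- vec (real R)) (vec (real R + 1))" for k
    proof
      fix z assume "z \<in> T k"
      then obtain a where a: "a \<in> C R" "z = vec (1 / real (Suc k)) + a" unfolding T_def by auto
      have "0 < 1 / real (Suc k)" "1 / real (Suc k) \<le> 1" by (auto simp: field_simps)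
      moreover have ai: "- real R \<le> a$i \<and> a$i \<le> real R" for i using a(1) unfolding C_def by (auto simp: mem_box_cart)
      ultimately show "z \<in> cbox (- vec (real R)) (vec (real R + 1))"
        unfolding mem_box_cart a(2)
      proof (intro allI)
        fix i show "(- vec (real R)) $ i \<le> (vec (1 / real (Suc k)) + a) $ i \<and> (vec (1 / real (Suc k)) + a) $ i \<le> vec (real R + 1) $ i"
        proof -
          have c: "0 < 1/(1+real k)" "1/(1+real k) \<le> 1" by auto
          show ?thesis apply simp using ai[of i] c by linarith
        qed
      qed
    qed
    have Tdisj: "T j \<inter> T k = {}" if "j < k" for j k
    proof (rule ccontr)
      assume "T j \<inter> T k \<noteq> {}"
      then obtain a b where ab: "a \<in> C R" "b \<in> C R" "vec (1 / real (Suc j)) + a = vec (1 / real (Suc k)) + b"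
        unfolding T_def by auto
      define s where "s = 1 / real (Suc j) - 1 / real (Suc k)"
      have s: "s > 0" unfolding s_def using that by (simp add: frac_less2)
      have "a = b - vec s" using ab(3) unfolding s_def vec_eq_iff by (auto simp: algebra_simps)
      then show False using disj[of b s] ab s unfolding C_def by auto
    qed
    have "real N * ?m \<le> measure lebesgue (cbox (- vec (real R)) (vec (real R + 1)) :: (real^'n) set)" for N
    proof -
      have "measure lebesgue (\<Union>k\<in>{..<N}. T k) = (\<Sum>k\<in>{..<N}. measure lebesgue (T k))"
        by (rule measure_UNION') (auto simp: Tm pairwise_def disjnt_def nat_neq_iff dest: Tdisj)
      also have "\<dots> = real N * ?m" by (simp add: Tmeas)
      finally have eq: "measure lebesgue (\<Union>k\<in>{..<N}. T k) = real N * ?m" .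
      have "measure lebesgue (\<Union>k\<in>{..<N}. T k) \<le> measure lebesgue (cbox (- vec (real R)) (vec (real R + 1)) :: (real^'n) set)"
        apply (rule measure_mono_fmeasurable)
        using Tsub apply blast
         apply (intro sets.finite_UN; use Tm in blast)
        apply simp
        done
      then show ?thesis using eq by simp
    qed
    moreover have "?m \<ge> 0" by simp
    ultimately have "?m = 0"
    proof -
      assume bnd: "\<And>N. real N * ?m \<le> measure lebesgue (cbox (- vec (real R)) (vec (real R + 1)) :: (real^'n) set)"
        and nn: "?m \<ge> 0"
      show "?m = 0"
      proof (rule ccontr)
        assume "?m \<noteq> 0"
        then have "?m > 0" using nn by linarith
        then obtain N where "measure lebesgue (cbox (- vec (real R)) (vec (real R + 1)) :: (real^'n) set) < real N * ?m"
          using reals_Archimedean3 by blast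
        then show False using bnd[of N] by simp
      qed
    qed
    then show ?thesis using cC negligible_iff_measure0 lmeasurable_compact by blast
  qed
  then have "negligible (\<Union>R. C R)" by (rule negligible_Union_nat)
  moreover have "B \<subseteq> (\<Union>R. C R)"
  proof
    fix p assume p: "p \<in> B"
    obtain R :: nat where R: "norm p \<le> real R" using real_arch_simple by blast
    have pR: "\<bar>p$i\<bar> \<le> real R" for i using component_le_norm_cart[of p i] R by linarith
    have "- real R \<le> p$i \<and> p$i \<le> real R" for i using pR[of i] abs_le_iff[of "p$i" "real R"] by linarith
    then have "p \<in> C R" using p unfolding C_def by (auto simp: mem_box_cart)
    then show "p \<in> (\<Union>R. C R)" by blast
  qed
  ultimately show ?thesis unfolding B_def using negligible_subset by blast
qed

lemma down_meas:
  fixes D :: "(real^'n) set"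
  assumes down: "\<And>x y. y \<le> x \<Longrightarrow> x \<in> D \<Longrightarrow> y \<in> D"
  shows "D \<in> sets lebesgue"
proof -
  have "negligible (D - interior D)"
  proof (rule negligible_subset[OF down_bdry_null[OF down]])
    show "D - interior D \<subseteq> closure D - interior D" using closure_subset by blast
  qed
  then have "D - interior D \<in> sets lebesgue" by (rule negligible_imp_sets)
  moreover have "interior D \<in> sets lebesgue" by (simp add: borel_open)
  ultimately have "(D - interior D) \<union> interior D \<in> sets lebesgue" by blast
  moreover have "(D - interior D) \<union> interior D = D" using interior_subset by blast
  ultimately show ?thesis by simp
qed

lemma up_meas:
  fixes U :: "(real^'n) set"
  assumes up: "\<And>x y. x \<le> y \<Longrightarrow> x \<in> U \<Longrightarrow> y \<in> U"
  shows "U \<in> sets lebesgue"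
proof -
  have "UNIV - U \<in> sets lebesgue"
  proof (rule down_meas)
    fix x y assume "y \<le> x" "x \<in> UNIV - U"
    then show "y \<in> UNIV - U" using up[of y x] by blast
  qed
  then have "space lebesgue - (UNIV - U) \<in> sets lebesgue" by (rule sets.compl_sets)
  moreover have "UNIV - (UNIV - U) = U" by blast
  ultimately show ?thesis by simp
qed

lemma step_find:
  fixes s :: "nat \<Rightarrow> real"
  shows "s 0 \<le> x \<Longrightarrow> x < s m \<Longrightarrow> \<exists>k<m. s k \<le> x \<and> x < s (Suc k)"
proof (induction m)
  case 0 then show ?case by simp
next
  case (Suc m)
  show ?case
  proof (cases "x < s m")
    case True then show ?thesis using Suc by (meson less_SucI)
  next
    case False then show ?thesis using Suc by (meson lessI not_less)
  qed
qed

lemma finite_vals: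
  fixes \<sigma> :: "real ^ 'n \<Rightarrow> ereal"
  assumes "\<sigma> \<in> StateSpace" "q > 0"
  shows "finite (\<sigma> ` cube q)"
proof -
  have "q + 1 > 0" using assms by simp
  then obtain s :: "'n \<Rightarrow> nat \<Rightarrow> real" and m :: "'n \<Rightarrow> nat" where
    sm: "\<forall>i. s i 0 = -(q+1) \<and> s i (m i) = q+1 \<and> (\<forall>k < m i. s i k < s i (Suc k))" and
    cst: "\<forall>k :: 'n \<Rightarrow> nat. (\<forall>i. k i < m i) \<longrightarrow>
            (\<forall>x y. (\<forall>i. s i (k i) \<le> x $ i \<and> x $ i < s i (Suc (k i))) \<longrightarrow>
                   (\<forall>i. s i (k i) \<le> y $ i \<and> y $ i < s i (Suc (k i))) \<longrightarrow>
                   \<sigma> x = \<sigma> y)"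
    using assms(1) unfolding StateSpace_def by blast
  define rep where "rep k = (\<chi> i. s i (k i))" for k :: "'n \<Rightarrow> nat"
  have "\<sigma> ` cube q \<subseteq> (\<lambda>k. \<sigma> (rep k)) ` {k. \<forall>i. k i < m i}"
  proof
    fix v assume "v \<in> \<sigma> ` cube q"
    then obtain x where x: "x \<in> cube q" "v = \<sigma> x" by auto
    have "\<forall>i. \<exists>k<m i. s i k \<le> x$i \<and> x$i < s i (Suc k)"
    proof
      fix i
      have "-q \<le> x$i" "x$i \<le> q" using x(1) by (auto simp: cube_def less_eq_vec_def)
      then show "\<exists>k<m i. s i k \<le> x$i \<and> x$i < s i (Suc k)"
        using sm step_find[of "s i" "x$i" "m i"] by simp
    qed
    then obtain k where k: "\<forall>i. k i < m i \<and> s i (k i) \<le> x$i \<and> x$i < s i (Suc (k i))"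
      using choice[of "\<lambda>i k. k < m i \<and> s i k \<le> x$i \<and> x$i < s i (Suc k)"] by blast
    have kk: "\<forall>i. k i < m i" using k by blast
    have inx: "\<forall>i. s i (k i) \<le> x$i \<and> x$i < s i (Suc (k i))" using k by blast
    have inr: "\<forall>i. s i (k i) \<le> rep k $ i \<and> rep k $ i < s i (Suc (k i))"
      using sm kk by (simp add: rep_def)
    have H: "\<And>x y. (\<forall>i. s i (k i) \<le> x $ i \<and> x $ i < s i (Suc (k i))) \<Longrightarrow>
                   (\<forall>i. s i (k i) \<le> y $ i \<and> y $ i < s i (Suc (k i))) \<Longrightarrow> \<sigma> x = \<sigma> y"
      using cst kk by blast
    have "\<sigma> x = \<sigma> (rep k)" by (rule H[OF inx inr])
    then show "v \<in> (\<lambda>k. \<sigma> (rep k)) ` {k. \<forall>i. k i < m i}" using k x by auto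
  qed
  moreover have "finite {k::'n\<Rightarrow>nat. \<forall>i. k i < m i}"
  proof -
    have "{k::'n\<Rightarrow>nat. \<forall>i. k i < m i} = Pi\<^sub>E UNIV (\<lambda>i. {..<m i})"
      by (auto simp: PiE_UNIV_domain Pi_def)
    then show ?thesis by (simp add: finite_PiE)
  qed
  ultimately show ?thesis using finite_subset by blast
qed

lemma bounded_level:
  fixes \<sigma> :: "real ^ 'n \<Rightarrow> ereal"
  assumes "\<sigma> \<in> StateSpace"
  shows "\<exists>M. \<forall>y. y \<le> b \<and> \<sigma> y \<ge> ereal (real_of_int h) \<longrightarrow> supnorm y < M"
proof -
  let ?F = "\<lambda>M::real. Sup {ereal (supnorm y powr (- real CARD('n) / (real CARD('n) + 1))) * \<sigma> y
                           | y. y \<le> b \<and> supnorm y \<ge> M}"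
  have "(?F \<longlongrightarrow> -\<infinity>) at_top" using assms unfolding StateSpace_def by blast
  then have "eventually (\<lambda>M. ?F M < ereal (- \<bar>real_of_int h\<bar>)) at_top"
    unfolding tendsto_MInfty by blast
  then obtain M0 where M0: "\<And>M. M \<ge> M0 \<Longrightarrow> ?F M < ereal (- \<bar>real_of_int h\<bar>)"
    unfolding eventually_at_top_linorder by blast
  define M where "M = max M0 1"
  have "supnorm y < M" if y: "y \<le> b" "\<sigma> y \<ge> ereal (real_of_int h)" for y
  proof (rule ccontr)
    assume "\<not> supnorm y < M"
    then have yM: "supnorm y \<ge> M" by simp
    define c where "c = supnorm y powr (- real CARD('n) / (real CARD('n) + 1))"
    have s1: "supnorm y \<ge> 1" using yM unfolding M_def by simp
    have c0: "c > 0" unfolding c_def using s1 by simp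
    have "- real CARD('n) / (real CARD('n) + 1) \<le> 0" by (simp add: divide_nonneg_pos)
    then have c1: "c \<le> 1" unfolding c_def using s1 powr_mono[of "- real CARD('n) / (real CARD('n) + 1)" 0 "supnorm y"]
      by simp
    have "ereal c * \<sigma> y \<le> ?F M"
      by (rule Sup_upper) (use y yM c_def in auto)
    also have "\<dots> < ereal (- \<bar>real_of_int h\<bar>)" using M0[of M] by (simp add: M_def)
    finally have lt: "ereal c * \<sigma> y < ereal (- \<bar>real_of_int h\<bar>)" .
    show False
    proof (cases "\<sigma> y")
      case (real v)
      then have vh: "v \<ge> real_of_int h" using y by simp
      have "c * v \<ge> - \<bar>real_of_int h\<bar>"
      proof (cases "v \<ge> 0")
        case True then have "c * v \<ge> 0" using c0 by simp
        then show ?thesis by linarith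
      next
        case False
        then have "c * v \<ge> v" using c1 c0 by (simp add: mult_le_cancel_right1)
        then show ?thesis using vh by linarith
      qed
      then show False using lt real by simp
    next
      case PInf then show False using lt c0 by simp
    next
      case MInf then show False using y by simp
    qed
  qed
  then show ?thesis by blast
qed

lemma supnorm_ge: "\<bar>x$i\<bar> \<le> supnorm (x :: real^'n)"
  unfolding supnorm_def by (rule Max_ge) auto

lemma ybh_prop:
  fixes \<sigma> :: "real ^ 'n \<Rightarrow> ereal"
  assumes "\<sigma> \<in> StateSpace"
  shows "ybh \<sigma> b h \<le> b \<and> {x. x \<le> b \<and> \<sigma> x \<ge> ereal (real_of_int h)} \<subseteq> {ybh \<sigma> b h..b}"
proof -
  define A where "A = {x. x \<le> b \<and> \<sigma> x \<ge> ereal (real_of_int h)}"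
  define P where "P y \<longleftrightarrow> y \<le> b \<and> A \<subseteq> {y..b}" for y
  have "\<exists>g. P g \<and> (\<forall>y. P y \<longrightarrow> y \<le> g)"
  proof (cases "A = {}")
    case True then show ?thesis unfolding P_def by auto
  next
    case False
    then obtain x0 where x0: "x0 \<in> A" by blast
    obtain M where M: "\<And>y. y \<le> b \<and> \<sigma> y \<ge> ereal (real_of_int h) \<Longrightarrow> supnorm y < M"
      using bounded_level[OF assms, of b h] by blast
    have bdd: "bdd_below ((\<lambda>x. x$i) ` A)" for i
    proof (rule bdd_belowI2)
      fix x assume "x \<in> A"
      then have "supnorm x < M" using M unfolding A_def by blast
      then show "- M \<le> x$i" using supnorm_ge[of x i] by linarith
    qed
    define g where "g = (\<chi> i. Inf ((\<lambda>x. x$i) ` A))"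
    have gle: "g$i \<le> x$i" if "x \<in> A" for x i
      unfolding g_def using bdd that by (simp add: cInf_lower)
    have "P g"
      unfolding P_def
    proof
      show "g \<le> b" unfolding less_eq_vec_def
        using gle[OF x0] x0 unfolding A_def less_eq_vec_def by (auto intro: order_trans)
      show "A \<subseteq> {g..b}" using gle unfolding A_def by (auto simp: less_eq_vec_def)
    qed
    moreover have "y \<le> g" if "P y" for y
      unfolding less_eq_vec_def
    proof
      fix i
      have "\<forall>x\<in>A. y$i \<le> x$i" using that unfolding P_def by (auto simp: less_eq_vec_def)
      then show "y$i \<le> g$i" unfolding g_def using False by (auto intro: cInf_greatest)
    qed
    ultimately show ?thesis by blast
  qed
  then obtain g where g: "P g" "\<forall>y. P y \<longrightarrow> y \<le> g" by blast
  have "P (ybh \<sigma> b h)"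
    unfolding ybh_def A_def[symmetric] P_def[symmetric]
    by (rule GreatestI2_order[of P g]) (use g in auto)
  then show ?thesis unfolding P_def A_def by blast
qed

lemma psi_ge:
  fixes s l :: ereal
  assumes "0 \<le> l" "l * l \<le> s"
  shows "l \<le> (if s = \<infinity> then \<infinity> else ereal (sqrt (real_of_ereal s)))"
proof (cases "s = \<infinity>")
  case True then show ?thesis by simp
next
  case False
  have "l \<noteq> \<infinity>" using assms False by auto
  then obtain a where a: "l = ereal a" "a \<ge> 0" using assms(1) by (cases l) auto
  then have "ereal (a*a) \<le> s" using assms by simp
  then obtain b where b: "s = ereal b" "a * a \<le> b" using False by (cases s) auto
  have "a \<le> sqrt b" using b a by (intro real_le_rsqrt) (simp add: power2_eq_square)
  then show ?thesis using a b by simp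
qed

lemma sq_nonneg_ereal: "0 \<le> (x::ereal) * x"
  by (cases x) auto

theorem lemma7p2:
  fixes q :: real and \<sigma> :: "real ^ 'n \<Rightarrow> ereal"
  assumes "CARD('n) \<ge> 2"
    and "q > 0"
    and "\<sigma> \<in> StateSpace"
  shows "SK \<sigma> (cube q) \<in> sets lebesgue \<and>
         enn2ereal (emeasure lebesgue (SK \<sigma> (cube q))) \<le> 2 ^ (CARD('n) + 1) * psi q \<sigma>"
proof -
  let ?K = "cube q :: (real^'n) set"
  have mono: "mono \<sigma>" and istar: "\<And>x. \<sigma> x \<in> int_star"
    using assms(3) unfolding StateSpace_def by auto
  have fin_int: "\<exists>n::int. \<sigma> x = ereal (real_of_int n)" if "\<bar>\<sigma> x\<bar> \<noteq> \<infinity>" for x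
    using istar[of x] that unfolding int_star_def by auto
  define V where "V = {\<sigma> x | x. x \<in> ?K \<and> \<bar>\<sigma> x\<bar> \<noteq> \<infinity>}"
  have finV: "finite V"
    by (rule finite_subset[OF _ finite_vals[OF assms(3) assms(2)]]) (auto simp: V_def)
  have meas: "SK \<sigma> ?K \<in> sets lebesgue"
  proof -
    define Dn where "Dn n = {y. \<exists>x\<in>?K. \<sigma> x = ereal (real_of_int n) \<and> y \<le> x}" for n :: int
    define Ln where "Ln n = {y. \<sigma> y \<ge> ereal (real_of_int n)}" for n :: int
    have eq: "SK \<sigma> ?K = (\<Union>n. Dn n \<inter> Ln n)"
    proof
      show "SK \<sigma> ?K \<subseteq> (\<Union>n. Dn n \<inter> Ln n)"
      proof
        fix y assume "y \<in> SK \<sigma> ?K"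
        then obtain x where x: "x \<in> ?K" "\<bar>\<sigma> x\<bar> \<noteq> \<infinity>" "y \<le> x" "\<sigma> y = \<sigma> x"
          unfolding SK_def Sx_def by (auto split: if_splits)
        obtain n :: int where "\<sigma> x = ereal (real_of_int n)" using fin_int[OF x(2)] by blast
        then have "y \<in> Dn n \<inter> Ln n" using x unfolding Dn_def Ln_def by auto
        then show "y \<in> (\<Union>n. Dn n \<inter> Ln n)" by blast
      qed
      show "(\<Union>n. Dn n \<inter> Ln n) \<subseteq> SK \<sigma> ?K"
      proof
        fix y assume "y \<in> (\<Union>n. Dn n \<inter> Ln n)"
        then obtain n x where x: "x \<in> ?K" "\<sigma> x = ereal (real_of_int n)" "y \<le> x"
          and yn: "\<sigma> y \<ge> ereal (real_of_int n)" unfolding Dn_def Ln_def by auto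
        have "\<sigma> y \<le> \<sigma> x" using mono x(3) by (rule monoD)
        then have "\<sigma> y = \<sigma> x" using yn x(2) by simp
        then have "y \<in> Sx \<sigma> x" unfolding Sx_def using x by auto
        then show "y \<in> SK \<sigma> ?K" unfolding SK_def using x by auto
      qed
    qed
    have "Dn n \<inter> Ln n \<in> sets lebesgue" for n
    proof (rule sets.Int)
      show "Dn n \<in> sets lebesgue"
        by (rule down_meas) (auto simp: Dn_def intro: order_trans)
      show "Ln n \<in> sets lebesgue"
      proof (rule up_meas)
        fix x y :: "real^'n" assume "x \<le> y" "x \<in> Ln n"
        then show "y \<in> Ln n" unfolding Ln_def using monoD[OF mono \<open>x \<le> y\<close>] by auto
      qed
    qed
    then have "(\<Union>n\<in>UNIV. Dn n \<inter> Ln n) \<in> sets lebesgue"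
      by (intro sets.countable_UN) auto
    then show ?thesis using eq by simp
  qed
  have psi_nonneg: "0 \<le> psi q \<sigma>" unfolding psi_def Let_def by (auto intro!: real_of_ereal_pos sum_nonneg sq_nonneg_ereal)
  show ?thesis
  proof (cases "V = {}")
    case True
    have "SK \<sigma> ?K = {}"
      using True unfolding SK_def Sx_def V_def by auto
    moreover have "0 \<le> (2::ereal) ^ (CARD('n) + 1) * psi q \<sigma>"
      using psi_nonneg by (intro ereal_0_le_mult) auto
    ultimately show ?thesis using meas by (simp add: zero_ennreal.rep_eq)
  next
    case False
    have IV: "Ival ?K \<sigma> = Min V" unfolding Ival_def V_def[symmetric] using Min_Inf[OF finV False] by simp
    have JV: "Jval ?K \<sigma> = Max V" unfolding Jval_def V_def[symmetric] using Max_Sup[OF finV False] by simp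
    have "Min V \<in> V" using finV False by simp
    then obtain x0 where x0: "x0 \<in> ?K" "\<bar>\<sigma> x0\<bar> \<noteq> \<infinity>" "\<sigma> x0 = Min V" unfolding V_def by auto
    obtain I0 :: int where I0: "\<sigma> x0 = ereal (real_of_int I0)" using fin_int[OF x0(2)] by blast
    have "Max V \<in> V" using finV False by simp
    then obtain x1 where x1: "x1 \<in> ?K" "\<bar>\<sigma> x1\<bar> \<noteq> \<infinity>" "\<sigma> x1 = Max V" unfolding V_def by auto
    obtain J0 :: int where J0: "\<sigma> x1 = ereal (real_of_int J0)" using fin_int[OF x1(2)] by blast
    have Ieq: "Ival ?K \<sigma> = ereal (real_of_int I0)" using IV x0 I0 by simp
    have Jeq: "Jval ?K \<sigma> = ereal (real_of_int J0)" using JV x1 J0 by simp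
    have IJ: "I0 \<le> J0"
    proof -
      have "Min V \<le> Max V" using finV False \<open>Min V \<in> V\<close> by simp
      then have "ereal (real_of_int I0) \<le> ereal (real_of_int J0)" using x0(3) x1(3) I0 J0 by metis
      then show ?thesis by simp
    qed
    have lowV: "ereal (real_of_int I0) \<le> \<sigma> x" if "x \<in> ?K" "\<bar>\<sigma> x\<bar> \<noteq> \<infinity>" for x
    proof -
      have "\<sigma> x \<in> V" using that unfolding V_def by auto
      then have "Min V \<le> \<sigma> x" using finV by simp
      then show ?thesis using x0 I0 by simp
    qed
    define h where "h = I0 - 1"
    define y0 where "y0 = ybh \<sigma> (vec q) h"
    have y0: "y0 \<le> vec q" "{x. x \<le> vec q \<and> \<sigma> x \<ge> ereal (real_of_int h)} \<subseteq> {y0..vec q}"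
      using ybh_prop[OF assms(3), of "vec q" h] unfolding y0_def by auto
    have SKsub: "SK \<sigma> ?K \<subseteq> {y0..vec q}"
    proof
      fix y assume "y \<in> SK \<sigma> ?K"
      then obtain x where x: "x \<in> ?K" "\<bar>\<sigma> x\<bar> \<noteq> \<infinity>" "y \<le> x" "\<sigma> y = \<sigma> x"
        unfolding SK_def Sx_def by (auto split: if_splits)
      have "x \<le> vec q" using x(1) unfolding cube_def by auto
      then have "y \<le> vec q" using x(3) by (rule order_trans[rotated])
      moreover have "\<sigma> y \<ge> ereal (real_of_int h)"
        using lowV[OF x(1) x(2)] x(4) unfolding h_def by (simp add: order_trans[rotated])
      ultimately show "y \<in> {y0..vec q}" using y0(2) by blast
    qed
    define Vol where "Vol = vprod (vec q - y0)"
    have Vol_eq: "Vol = (\<Prod>i\<in>UNIV. vec q $ i - y0 $ i)" unfolding Vol_def vprod_def by simp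
    have Vol_nn: "Vol \<ge> 0" unfolding Vol_eq using y0(1)
      by (intro prod_nonneg) (auto simp: less_eq_vec_def)
    have box: "emeasure lebesgue {y0..vec q} = ennreal Vol"
    proof -
      have ne: "cbox y0 (vec q) \<noteq> {}" using y0(1) by (auto simp: interval_cbox_cart[symmetric])
      have "emeasure lebesgue (cbox y0 (vec q)) = ennreal (measure lebesgue (cbox y0 (vec q)))"
        by (rule emeasure_eq_measure2) simp
      also have "measure lebesgue (cbox y0 (vec q)) = measure lborel (cbox y0 (vec q))"
        by (rule measure_completion) simp
      also have "\<dots> = Vol" unfolding Vol_eq using content_cbox_cart[OF ne] by simp
      finally show ?thesis by (simp add: interval_cbox_cart)
    qed
    have m1: "enn2ereal (emeasure lebesgue (SK \<sigma> ?K)) \<le> ereal Vol"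
    proof -
      have "emeasure lebesgue (SK \<sigma> ?K) \<le> emeasure lebesgue {y0..vec q}"
        by (rule emeasure_mono[OF SKsub]) (simp add: interval_cbox_cart)
      then have "enn2ereal (emeasure lebesgue (SK \<sigma> ?K)) \<le> enn2ereal (ennreal Vol)"
        using box by (simp add: less_eq_ennreal.rep_eq)
      then show ?thesis using Vol_nn by simp
    qed
    define lam0 where "lam0 = lam q \<sigma> (I0 + 1)"
    have lam0: "ereal (Vol / 2 ^ (CARD('n) + 1)) \<le> lam0"
    proof -
      have "h \<in> {..I0 + 1 - 2}" unfolding h_def by simp
      moreover have e: "real_of_int (I0 + 1 - h) = 2" unfolding h_def by simp
      have "ereal (Vol / 2 ^ (CARD('n) + 1)) = ereal (vprod (vec q - ybh \<sigma> (vec q) h) / (real_of_int (I0 + 1 - h)) ^ (CARD('n) + 1))"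
        unfolding Vol_def y0_def e ..
      ultimately show ?thesis unfolding lam0_def lam_def
        by (intro SUP_upper2[of h]) auto
    qed
    have lam0_nn: "0 \<le> lam0" using lam0 Vol_nn by (meson order_trans ereal_less_eq(5) divide_nonneg_pos zero_less_power zero_less_numeral)
    define T where "T = {k::int. Ival ?K \<sigma> + 1 \<le> ereal (real_of_int k) \<and> ereal (real_of_int k) \<le> Jval ?K \<sigma> + 1}"
    have T_sub: "T \<subseteq> {I0 + 1 .. J0 + 1}"
      unfolding T_def Ieq Jeq by (auto simp: one_ereal_def)
    have finT: "finite T" using T_sub finite_subset by blast
    have memT: "I0 + 1 \<in> T" unfolding T_def Ieq Jeq using IJ by (simp add: one_ereal_def)
    have sq: "lam0 * lam0 \<le> (\<Sum>k\<in>T. lam q \<sigma> k * lam q \<sigma> k)"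
      unfolding lam0_def sum.remove[OF finT memT]
      by (rule add_increasing2) (auto intro!: sum_nonneg sq_nonneg_ereal)
    have psi_ge0: "lam0 \<le> psi q \<sigma>"
      unfolding psi_def Let_def T_def[symmetric] by (rule psi_ge[OF lam0_nn sq])
    have e2: "(2::ereal) ^ (CARD('n) + 1) = ereal (2 ^ (CARD('n) + 1))"
      by (simp del: power_Suc)
    have "ereal Vol = 2 ^ (CARD('n) + 1) * ereal (Vol / 2 ^ (CARD('n) + 1))"
      unfolding e2 by simp
    also have "\<dots> \<le> 2 ^ (CARD('n) + 1) * lam0"
      by (rule ereal_mult_left_mono[OF lam0]) simp
    also have "\<dots> \<le> 2 ^ (CARD('n) + 1) * psi q \<sigma>"
      by (rule ereal_mult_left_mono[OF psi_ge0]) simp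
    finally show ?thesis using m1 meas by simp
  qed
qed

end
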